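(* Let $\tau\ge1$ and let $\mathcal C$ be any finite set of candidates. Form the pairwise majority graph on $\mathcal C$ in which, for each pair, the winner is determined by Weighted Majority Rule 1. Then every candidate in the uncovered set of this graph has distortion at most $$\min\Big\{\max\big\{\tfrac{3\tau-1}{\tau+1},\tfrac{\tau+2}{\tau}\big\}+2,\ \max\big\{(\tfrac{3\tau-1}{\tau+1})^2,(\tfrac{\tau+2}{\tau})^2\big\}\Big\}.$$
   Context: Voters $N=\{1,\dots,n\}$ and candidates $\mathcal C$ are points of an arbitrary metric space $(X,d)$. Voter $i$ prefers $P$ to $Q$ only if $d(i,P)\le d(i,Q)$, with preference strength $\alpha_i^{PQ}=d(i,Q)/d(i,P)\ge1$. $SC(Y)=\sum_{i\in N}d(i,Y)$. Distortion of a candidate $P$ is $SC(P)/\min_{Z\in\mathcal C}SC(Z)$. Weighted Majority Rule 1 for a pair $P,Q$: voters whose preference between $P$ and $Q$ has strength $>\tau$ are strong, others weak; if $\tau\ge\sqrt2+1$ strong voters get weight $\frac{\tau+1}{\tau-1}$, weak voters weight $1$; if $\tau<\sqrt2+1$ strong voters get weight $\tau$, weak voters weight $1$; the candidate with larger total weight of supporters wins the pair (ties broken arbitrarily). A candidate $P$ is in the uncovered set of the resulting tournament if for every other candidate $Z$, either $P$ beats $Z$, or there is a candidate $Q$ such that $P$ beats $Q$ and $Q$ beats $Z$. *)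

theory Defs
  imports "HOL-Analysis.Analysis"
begin

text \<open>Voter i (located at vloc i) prefers P over Q (candidates located at cloc P, cloc Q)
  with strength d(i,Q)/d(i,P) > tau. Written multiplicatively so that d(i,P) = 0 < d(i,Q)
  counts as infinite strength and d(i,P) = d(i,Q) = 0 as strength 1 (weak).\<close>
definition strong_pref ::
  "('a \<Rightarrow> 'a \<Rightarrow> real) \<Rightarrow> ('v \<Rightarrow> 'a) \<Rightarrow> ('c \<Rightarrow> 'a) \<Rightarrow> real \<Rightarrow> 'v \<Rightarrow> 'c \<Rightarrow> 'c \<Rightarrow> bool" where
  "strong_pref d vloc cloc tau i P Q \<longleftrightarrow> d (vloc i) (cloc Q) > tau * d (vloc i) (cloc P)"

definition wmr1_weight :: "real \<Rightarrow> bool \<Rightarrow> real" where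
  "wmr1_weight tau is_strong =
     (if is_strong then (if tau \<ge> sqrt 2 + 1 then (tau + 1) / (tau - 1) else tau) else 1)"

definition wmr1_support ::
  "('a \<Rightarrow> 'a \<Rightarrow> real) \<Rightarrow> 'v set \<Rightarrow> ('v \<Rightarrow> 'a) \<Rightarrow> ('c \<Rightarrow> 'a) \<Rightarrow> ('v \<Rightarrow> 'c \<Rightarrow> 'c \<Rightarrow> bool)
     \<Rightarrow> real \<Rightarrow> 'c \<Rightarrow> 'c \<Rightarrow> real" where
  "wmr1_support d N vloc cloc pref tau P Q =
     (\<Sum>i\<in>{i\<in>N. pref i P Q}. wmr1_weight tau (strong_pref d vloc cloc tau i P Q))"

definition consistent_prefs ::
  "('a \<Rightarrow> 'a \<Rightarrow> real) \<Rightarrow> 'v set \<Rightarrow> ('v \<Rightarrow> 'a) \<Rightarrow> 'c set \<Rightarrow> ('c \<Rightarrow> 'a)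
     \<Rightarrow> ('v \<Rightarrow> 'c \<Rightarrow> 'c \<Rightarrow> bool) \<Rightarrow> bool" where
  "consistent_prefs d N vloc C cloc pref \<longleftrightarrow>
     (\<forall>i\<in>N. \<forall>P\<in>C. \<forall>Q\<in>C. P \<noteq> Q \<longrightarrow>
        (pref i P Q \<longleftrightarrow> \<not> pref i Q P) \<and>
        (pref i P Q \<longrightarrow> d (vloc i) (cloc P) \<le> d (vloc i) (cloc Q)))"

definition wmr1_tournament ::
  "('a \<Rightarrow> 'a \<Rightarrow> real) \<Rightarrow> 'v set \<Rightarrow> ('v \<Rightarrow> 'a) \<Rightarrow> 'c set \<Rightarrow> ('c \<Rightarrow> 'a)
     \<Rightarrow> ('v \<Rightarrow> 'c \<Rightarrow> 'c \<Rightarrow> bool) \<Rightarrow> real \<Rightarrow> ('c \<Rightarrow> 'c \<Rightarrow> bool) \<Rightarrow> bool" where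
  "wmr1_tournament d N vloc C cloc pref tau beats \<longleftrightarrow>
     (\<forall>P\<in>C. \<forall>Q\<in>C. P \<noteq> Q \<longrightarrow>
        (beats P Q \<longleftrightarrow> \<not> beats Q P) \<and>
        (beats P Q \<longrightarrow> wmr1_support d N vloc cloc pref tau P Q \<ge> wmr1_support d N vloc cloc pref tau Q P))"

definition uncovered :: "'c set \<Rightarrow> ('c \<Rightarrow> 'c \<Rightarrow> bool) \<Rightarrow> 'c \<Rightarrow> bool" where
  "uncovered C beats P \<longleftrightarrow> P \<in> C \<and>
     (\<forall>Z\<in>C. Z \<noteq> P \<longrightarrow> beats P Z \<or> (\<exists>Q\<in>C. beats P Q \<and> beats Q Z))"

definition social_cost ::
  "('a \<Rightarrow> 'a \<Rightarrow> real) \<Rightarrow> 'v set \<Rightarrow> ('v \<Rightarrow> 'a) \<Rightarrow> 'a \<Rightarrow> real" where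
  "social_cost d N vloc y = (\<Sum>i\<in>N. d (vloc i) y)"

end

theory Submission
  imports Defs
begin



definition fb :: "real \<Rightarrow> real" where
  "fb tau = max ((3 * tau - 1) / (tau + 1)) ((tau + 2) / tau)"

lemma sqrt2_facts: "sqrt 2 > 1" "sqrt 2 * sqrt 2 = 2"
proof -
  show "sqrt 2 > 1" by (rule real_less_rsqrt) simp
  show "sqrt 2 * sqrt 2 = 2" by simp
qed

lemma w_small: "tau < sqrt 2 + 1 \<Longrightarrow> wmr1_weight tau True = tau"
  by (simp add: wmr1_weight_def)
lemma w_big: "tau \<ge> sqrt 2 + 1 \<Longrightarrow> wmr1_weight tau True = (tau+1)/(tau-1)"
  by (simp add: wmr1_weight_def)
lemma w_false: "wmr1_weight tau False = 1" by (simp add: wmr1_weight_def)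

lemma w_ge1: assumes "tau \<ge> 1" shows "wmr1_weight tau True \<ge> 1"
proof (cases "tau \<ge> sqrt 2 + 1")
  case True
  have "tau - 1 > 0" using True sqrt2_facts by linarith
  then show ?thesis using True by (simp add: w_big field_simps)
next
  case False then show ?thesis using assms by (simp add: w_small)
qed

lemma f_ge: assumes "tau \<ge> 1" shows "fb tau \<ge> 1 + 2 / wmr1_weight tau True"
proof (cases "tau \<ge> sqrt 2 + 1")
  case True
  have t: "tau - 1 > 0" using True sqrt2_facts by linarith
  have "1 + 2 / wmr1_weight tau True = 1 + 2 * (tau - 1) / (tau + 1)"
    using t by (simp add: w_big[OF True])
  also have "\<dots> = (3 * tau - 1) / (tau + 1)"
    using t by (simp add: field_simps)
  finally show ?thesis unfolding fb_def by linarith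
next
  case False
  have "1 + 2 / wmr1_weight tau True = (tau + 2) / tau"
    using False assms by (simp add: w_small field_simps)
  then show ?thesis unfolding fb_def by linarith
qed

lemma f_ge_tau2: assumes "tau \<ge> 1" shows "fb tau * tau \<ge> tau + 2"
proof -
  have "(tau + 2) / tau \<le> fb tau" unfolding fb_def by simp
  then show ?thesis using assms by (simp add: field_simps)
qed

lemma f_ge1: assumes "tau \<ge> 1" shows "fb tau \<ge> 1"
proof -
  have "2 / wmr1_weight tau True \<ge> 0" using w_ge1[OF assms] by simp
  then show ?thesis using f_ge[OF assms] by linarith
qed

lemma f_tau: assumes "tau \<ge> 1" "fb tau < tau"
  shows "(tau - fb tau) * wmr1_weight tau True \<le> tau - 1"
proof (cases "tau \<ge> sqrt 2 + 1")
  case True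
  have t: "tau - 1 > 0" using True sqrt2_facts by linarith
  have "(3 * tau - 1) / (tau + 1) \<le> fb tau" unfolding fb_def by simp
  then have "3 * tau - 1 \<le> fb tau * (tau + 1)" using t by (simp add: field_simps)
  then have "(tau - fb tau) * (tau + 1) \<le> (tau - 1) * (tau - 1)" by (simp add: algebra_simps)
  moreover have "tau + 1 > 0" using t by simp
  ultimately have "(tau - fb tau) * ((tau + 1) / (tau - 1)) \<le> tau - 1"
    using t by (simp add: field_simps)
  then show ?thesis by (simp add: w_big[OF True])
next
  case False
  have s: "(tau - 1) * (tau - 1) \<le> 2"
  proof -
    have "tau - 1 \<le> sqrt 2" using False by linarith
    then have "(tau - 1) * (tau - 1) \<le> sqrt 2 * sqrt 2"
      using assms by (intro mult_mono) auto
    then show ?thesis using sqrt2_facts by simp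
  qed
  have "tau + 2 \<le> fb tau * tau" using f_ge_tau2[OF assms(1)] .
  then have "(tau - fb tau) * tau \<le> tau * tau - tau - 2" by (simp add: algebra_simps)
  also have "\<dots> \<le> tau - 1" using s by (simp add: algebra_simps)
  finally show ?thesis using False by (simp add: w_small)
qed

lemma step_Ss:
  fixes p q D tau f :: real
  assumes "tau \<ge> 1" "f * tau \<ge> tau + 2" "p \<ge> 0" "q \<ge> 0" "D \<le> p + q" "q > tau * p"
  shows "p - f * q \<le> - D"
proof -
  have "tau * D \<le> tau * (p + q)" using assms by (intro mult_left_mono) auto
  also have "\<dots> \<le> q + tau * q" using assms by (simp add: algebra_simps)
  finally have a: "tau * D \<le> (tau + 1) * q" by (simp add: algebra_simps)
  have "(tau + 1) * q \<le> (f * tau - 1) * q" using assms by (intro mult_right_mono) auto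
  have "tau * (p - f * q) = tau * p - (f * tau) * q" by (simp add: algebra_simps)
  also have "\<dots> \<le> q - (f * tau) * q" using assms by simp
  also have "\<dots> = - ((f * tau - 1) * q)" by (simp add: algebra_simps)
  also have "\<dots> \<le> - ((tau + 1) * q)" using \<open>(tau + 1) * q \<le> (f * tau - 1) * q\<close> by simp
  also have "\<dots> \<le> - (tau * D)" using a by simp
  finally have "tau * (p - f * q) \<le> tau * (- D)" by simp
  then show ?thesis using assms(1) mult_le_cancel_left_pos[of tau "p - f * q" "- D"] by linarith
qed

lemma step_Sw:
  fixes p q D f w :: real
  assumes "w > 0" "f \<ge> 1 + 2 / w" "p \<ge> 0" "q \<ge> 0" "D \<le> p + q" "p \<le> q"
  shows "p - f * q \<le> - (D / w)"
proof -
  have f1: "f - 1 \<ge> 2 / w" using assms by simp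
  have "D \<le> 2 * q" using assms by simp
  have "p - f * q \<le> - ((f - 1) * q)" using assms by (simp add: algebra_simps)
  also have "(2 / w) * q \<le> (f - 1) * q" using f1 assms by (intro mult_right_mono) auto
  then have "- ((f - 1) * q) \<le> - ((2 / w) * q)" by simp
  also have "(2 / w) * q = (2 * q) / w" by simp
  also have "- ((2 * q) / w) \<le> - (D / w)"
    using \<open>D \<le> 2 * q\<close> assms(1) by (simp add: divide_right_mono)
  finally show ?thesis .
qed

lemma step_Ts:
  fixes p q D f :: real
  assumes "f \<ge> 1" "q \<ge> 0" "p \<le> q + D"
  shows "p - f * q \<le> D"
proof -
  have "q \<le> f * q" using assms by (simp add: mult_right_mono[of 1 f q, simplified])
  then show ?thesis using assms by linarith
qed

lemma step_Tw:
  fixes p q D f w tau :: real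
  assumes "w > 0" "f \<ge> 1" "tau \<ge> 1" "f < tau \<Longrightarrow> (tau - f) * w \<le> tau - 1"
    "q \<ge> 0" "p \<le> q + D" "q \<le> p" "p \<le> tau * q" "D \<ge> 0"
  shows "p - f * q \<le> D / w"
proof (cases "f < tau")
  case False
  have "p - f * q \<le> tau * q - f * q" using assms by simp
  also have "\<dots> = (tau - f) * q" by (simp add: algebra_simps)
  also have "\<dots> \<le> 0" using False assms by (simp add: mult_nonpos_nonneg)
  also have "0 \<le> D / w" using assms by simp
  finally show ?thesis .
next
  case True
  have t: "tau - 1 > 0" using True assms by simp
  have "(tau - 1) * (p - f * q) = (tau - f) * (p - q) + (f - 1) * (p - tau * q)"
    by (simp add: algebra_simps)
  also have "(tau - f) * (p - q) \<le> (tau - f) * D" using True assms by (intro mult_left_mono) auto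
  also have "(f - 1) * (p - tau * q) \<le> 0" using assms by (simp add: mult_nonneg_nonpos)
  finally have a: "(tau - 1) * (p - f * q) \<le> (tau - f) * D" by simp
  have "(tau - f) * D * w \<le> (tau - 1) * D" 
    using assms(4)[OF True] assms(9) by (metis mult.commute mult.left_commute mult_right_mono)
  then have "(tau - f) * D \<le> (tau - 1) * (D / w)" using assms(1) by (simp add: field_simps)
  with a have "(tau - 1) * (p - f * q) \<le> (tau - 1) * (D / w)" by linarith
  then show ?thesis using t mult_le_cancel_left_pos[of "tau - 1" "p - f * q" "D / w"] by linarith
qed

lemma two_T:
  fixes p q z x y :: real
  assumes "p \<le> z + x" "y \<le> z + q"
  shows "p - q - 2 * z \<le> x - y"
  using assms by linarith

lemma two_S:
  fixes p q z x y :: real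
  assumes "x \<le> z + p" "q \<le> z + y" "p \<le> q" "z \<ge> 0"
  shows "p - q - 2 * z \<le> - (x - y)" "p - q - 2 * z \<le> 0"
  using assms by linarith+

lemma two_Tw:
  fixes p q z x y tau :: real
  assumes "q \<le> z + y" "p \<le> tau * q" "tau \<ge> 1" "tau \<le> 3" "z \<ge> 0"
  shows "p - q - 2 * z \<le> (tau - 1) * y"
proof -
  have "p - q \<le> (tau - 1) * q" using assms by (simp add: algebra_simps)
  also have "\<dots> \<le> (tau - 1) * (z + y)" using assms by (intro mult_left_mono) auto
  finally have "p - q - 2 * z \<le> (tau - 1) * y + (tau - 3) * z" by (simp add: algebra_simps)
  moreover have "(tau - 3) * z \<le> 0" using assms by (simp add: mult_nonpos_nonneg)
  ultimately show ?thesis by linarith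
qed

lemma two_Ss_big:
  fixes p q z x y tau :: real
  assumes "x \<le> z + p" "q > tau * p" "tau \<ge> 3" "p \<ge> 0"
  shows "p - q - 2 * z \<le> - 2 * x"
proof -
  have "3 * p \<le> tau * p" using assms by (intro mult_right_mono) auto
  then show ?thesis using assms by linarith
qed

lemma two_Ss_small:
  fixes p q z x y tau :: real
  assumes "x \<le> z + p" "q \<le> z + y" "q > tau * p" "tau \<ge> 1" "tau \<le> 3"
    "p \<ge> 0" "y \<ge> 0" "x \<ge> 0"
  shows "p - q - 2 * z \<le> - (tau * min (x - y) ((tau - 1) * y))"
proof -
  define g where "g = p - q - 2 * z"
  have h1: "g \<le> 2 * p - 2 * q - x + y" using assms unfolding g_def by linarith
  have h2: "g \<le> 3 * p - q - 2 * x" using assms unfolding g_def by linarith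
  have "(1 + tau) * g = (3 - tau) * g + (2 * tau - 2) * g" by (simp add: algebra_simps)
  also have "(3 - tau) * g \<le> (3 - tau) * (2 * p - 2 * q - x + y)"
    using h1 assms by (intro mult_left_mono) auto
  also have "(2 * tau - 2) * g \<le> (2 * tau - 2) * (3 * p - q - 2 * x)"
    using h2 assms by (intro mult_left_mono) auto
  finally have "(1 + tau) * g \<le> (3 - tau) * (2 * p - 2 * q - x + y) + (2 * tau - 2) * (3 * p - q - 2 * x)"
    by simp
  also have "\<dots> = 4 * (tau * p) - 4 * q - (3 * tau - 1) * x + (3 - tau) * y"
    by (simp add: algebra_simps)
  finally have k: "(1 + tau) * g \<le> - (3 * tau - 1) * x + (3 - tau) * y" using assms by linarith
  have "(1 + tau) * g \<le> (1 + tau) * (- (tau * min (x - y) ((tau - 1) * y)))"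
  proof (cases "x - y \<le> (tau - 1) * y")
    case True
    then have m: "min (x - y) ((tau - 1) * y) = x - y" by simp
    have xy: "x \<le> tau * y" using True by (simp add: algebra_simps)
    have a: "(tau - 1) * (tau - 1) * x \<le> (tau - 1) * (tau - 1) * (tau * y)"
      using xy assms by (intro mult_left_mono) auto
    have b0: "(tau - 3) * (tau + 1) \<le> 0" using assms by (intro mult_nonpos_nonneg) auto
    have b: "(tau - 1) * tau \<le> tau + 3" using b0 by (simp add: algebra_simps)
    have c: "((tau - 1) * tau) * ((tau - 1) * y) \<le> (tau + 3) * ((tau - 1) * y)"
      using b assms by (intro mult_right_mono) auto
    have "(1 + tau) * (- (tau * (x - y))) - (- (3 * tau - 1) * x + (3 - tau) * y)
        = (tau + 3) * ((tau - 1) * y) - (tau - 1) * (tau - 1) * x"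
      by (simp add: algebra_simps)
    moreover have "(tau - 1) * (tau - 1) * (tau * y) = ((tau - 1) * tau) * ((tau - 1) * y)"
      by (simp add: algebra_simps)
    ultimately show ?thesis using k a c m by linarith
  next
    case False
    then have m: "min (x - y) ((tau - 1) * y) = (tau - 1) * y" by simp
    have xy: "tau * y \<le> x" using False by (simp add: algebra_simps)
    have a: "(3 * tau - 1) * (tau * y) \<le> (3 * tau - 1) * x"
      using xy assms by (intro mult_left_mono) auto
    have b: "(tau - 3) * ((tau - 1) * (tau + 1)) \<le> 0"
      using assms by (intro mult_nonpos_nonneg) auto
    have c: "((tau - 3) * ((tau - 1) * (tau + 1))) * y \<le> 0"
      using b assms by (simp add: mult_nonpos_nonneg)
    have "(1 + tau) * (- (tau * ((tau - 1) * y))) - (- (3 * tau - 1) * (tau * y) + (3 - tau) * y)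
        = - (((tau - 3) * ((tau - 1) * (tau + 1))) * y)"
      by (simp add: algebra_simps)
    moreover have "- (3 * tau - 1) * x = - ((3 * tau - 1) * x)" by (simp only: mult_minus_left)
    ultimately show ?thesis unfolding m using k a c by linarith
  qed
  moreover have pos: "(0::real) < 1 + tau" using assms(4) by linarith
  ultimately have "g \<le> - (tau * min (x - y) ((tau - 1) * y))"
    by (simp only: mult_le_cancel_left_pos[OF pos])
  then show ?thesis unfolding g_def .
qed




definition sig where
  "sig d vloc cloc pref tau P Q i = (if pref i P Q then - wmr1_weight tau (strong_pref d vloc cloc tau i P Q)
      else wmr1_weight tau (strong_pref d vloc cloc tau i Q P))"

lemma sum_sig:
  assumes "finite N" "consistent_prefs d N vloc C cloc pref" "P \<in> C" "Q \<in> C" "P \<noteq> Q"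
  shows "(\<Sum>i\<in>N. sig d vloc cloc pref tau P Q i) =
    wmr1_support d N vloc cloc pref tau Q P - wmr1_support d N vloc cloc pref tau P Q"
proof -
  have e1: "N \<inter> {i. pref i P Q} = {i\<in>N. pref i P Q}" by auto
  have c: "\<forall>i\<in>N. pref i P Q \<longleftrightarrow> \<not> pref i Q P"
    using conjunct1[OF assms(2)[unfolded consistent_prefs_def, rule_format, OF _ assms(3) assms(4) assms(5)]]
    by blast
  have e2: "N \<inter> - {i. pref i P Q} = {i\<in>N. pref i Q P}"
    using c by blast
  show ?thesis unfolding sig_def wmr1_support_def
    using sum.If_cases[OF assms(1), of "\<lambda>i. pref i P Q"
      "\<lambda>i. - wmr1_weight tau (strong_pref d vloc cloc tau i P Q)"
      "\<lambda>i. wmr1_weight tau (strong_pref d vloc cloc tau i Q P)"]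
    unfolding e1 e2 by (simp add: sum_negf)
qed

lemma sum_sig_le:
  assumes "finite N" "consistent_prefs d N vloc C cloc pref" "P \<in> C" "Q \<in> C" "P \<noteq> Q"
    "wmr1_tournament d N vloc C cloc pref tau beats" "beats P Q" "L \<ge> 0"
    "\<And>i. i \<in> N \<Longrightarrow> g i \<le> L * sig d vloc cloc pref tau P Q i"
  shows "(\<Sum>i\<in>N. g i) \<le> 0"
proof -
  have "(\<Sum>i\<in>N. g i) \<le> (\<Sum>i\<in>N. L * sig d vloc cloc pref tau P Q i)"
    using assms(9) by (rule sum_mono)
  also have "\<dots> = L * (\<Sum>i\<in>N. sig d vloc cloc pref tau P Q i)"
    by (rule sum_distrib_left[symmetric])
  also have "\<dots> = L * (wmr1_support d N vloc cloc pref tau Q P - wmr1_support d N vloc cloc pref tau P Q)"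
    unfolding sum_sig[OF assms(1-5)] ..
  also have "\<dots> \<le> 0"
  proof -
    have "wmr1_support d N vloc cloc pref tau P Q \<ge> wmr1_support d N vloc cloc pref tau Q P"
      using conjunct2[OF assms(6)[unfolded wmr1_tournament_def, rule_format, OF assms(3) assms(4) assms(5)]]
        assms(7) by (rule mp)
    then show ?thesis using assms(8) by (intro mult_nonneg_nonpos) auto
  qed
  finally show ?thesis .
qed




lemma one_step:
  assumes ms: "Metric_space M d" and fin: "finite N" and vN: "vloc ` N \<subseteq> M" and cC: "cloc ` C \<subseteq> M"
    and tau: "tau \<ge> 1" and cons: "consistent_prefs d N vloc C cloc pref"
    and tour: "wmr1_tournament d N vloc C cloc pref tau beats"
    and PQ: "P \<in> C" "Q \<in> C" "P \<noteq> Q" "beats P Q"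
  shows "social_cost d N vloc (cloc P) \<le> fb tau * social_cost d N vloc (cloc Q)"
proof -
  define w where "w = wmr1_weight tau True"
  define D where "D = d (cloc P) (cloc Q)"
  define f where "f = fb tau"
  have w0: "w > 0" and w1: "w \<ge> 1" using w_ge1[OF tau] unfolding w_def by auto
  have f1: "f \<ge> 1" using f_ge1[OF tau] unfolding f_def .
  have fw: "f \<ge> 1 + 2 / w" using f_ge[OF tau] unfolding f_def w_def .
  have ft: "f * tau \<ge> tau + 2" using f_ge_tau2[OF tau] unfolding f_def .
  have ftau: "f < tau \<Longrightarrow> (tau - f) * w \<le> tau - 1" using f_tau[OF tau] unfolding f_def w_def .
  have D0: "D \<ge> 0" unfolding D_def using Metric_space.nonneg[OF ms] .
  have "(\<Sum>i\<in>N. d (vloc i) (cloc P) - f * d (vloc i) (cloc Q)) \<le> 0"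
  proof (rule sum_sig_le[OF fin cons PQ(1,2,3) tour PQ(4), of "D / w"])
    show "0 \<le> D / w" using D0 w0 by simp
  next
    fix i assume i: "i \<in> N"
    define p where "p = d (vloc i) (cloc P)"
    define q where "q = d (vloc i) (cloc Q)"
    have vi: "vloc i \<in> M" and cp: "cloc P \<in> M" and cq: "cloc Q \<in> M" using i PQ vN cC by auto
    have p0: "p \<ge> 0" and q0: "q \<ge> 0" unfolding p_def q_def using Metric_space.nonneg[OF ms] by auto
    have t1: "D \<le> p + q" unfolding D_def p_def q_def
      using Metric_space.triangle[OF ms cp vi cq] Metric_space.commute[OF ms] by metis
    have t2: "p \<le> q + D" unfolding D_def p_def q_def
      using Metric_space.triangle[OF ms vi cq cp] Metric_space.commute[OF ms] by metis
    have t3: "q \<le> p + D" unfolding D_def p_def q_def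
      using Metric_space.triangle[OF ms vi cp cq] by metis
    show "p - f * q \<le> D / w * sig d vloc cloc pref tau P Q i"
    proof (cases "pref i P Q")
      case True
      then have pq: "p \<le> q" using conjunct2[OF cons[unfolded consistent_prefs_def, rule_format, OF i PQ(1) PQ(2) PQ(3)]]
        unfolding p_def q_def by blast
      show ?thesis
      proof (cases "q > tau * p")
        case True
        then have "sig d vloc cloc pref tau P Q i = - w"
          using \<open>pref i P Q\<close> unfolding sig_def w_def strong_pref_def p_def q_def by simp
        then show ?thesis using step_Ss[OF tau ft p0 q0 t1 True] w0 by simp
      next
        case False
        then have "sig d vloc cloc pref tau P Q i = - 1"
          using \<open>pref i P Q\<close> unfolding sig_def strong_pref_def p_def q_def by (simp add: w_false)
        then show ?thesis using step_Sw[OF w0 fw p0 q0 t1 pq] by simp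
      qed
    next
      case False
      then have pr: "pref i Q P" using conjunct1[OF cons[unfolded consistent_prefs_def, rule_format, OF i PQ(1) PQ(2) PQ(3)]]
        by blast
      then have qp: "q \<le> p" using conjunct2[OF cons[unfolded consistent_prefs_def, rule_format, OF i PQ(2) PQ(1) PQ(3)[symmetric]]]
        unfolding p_def q_def by blast
      show ?thesis
      proof (cases "p > tau * q")
        case True
        then have "sig d vloc cloc pref tau P Q i = w"
          using False unfolding sig_def w_def strong_pref_def p_def q_def by simp
        then show ?thesis using step_Ts[OF f1 q0 t2] w0 by simp
      next
        case F2: False
        then have "sig d vloc cloc pref tau P Q i = 1"
          using False unfolding sig_def strong_pref_def p_def q_def by (simp add: w_false)
        moreover have "p \<le> tau * q" using F2 by simp
        ultimately show ?thesis using step_Tw[OF w0 f1 tau ftau q0 t2 qp _ D0] by simp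
      qed
    qed
  qed
  then have "(\<Sum>i\<in>N. d (vloc i) (cloc P)) - f * (\<Sum>i\<in>N. d (vloc i) (cloc Q)) \<le> 0"
    by (simp add: sum_subtractf sum_distrib_left)
  then show ?thesis unfolding social_cost_def f_def by simp
qed

definition Lf :: "real \<Rightarrow> real \<Rightarrow> real \<Rightarrow> real" where
  "Lf tau x y = (if tau \<ge> 3 then max 0 (x - y)
     else max 0 (max ((x - y) / tau) (min (x - y) ((tau - 1) * y))))"

lemma sqrt2_le2: "sqrt 2 \<le> 2"
  using real_sqrt_le_mono[of 2 4] by simp





lemma two_voter:
  fixes p q z x y tau :: real
  assumes nn: "p \<ge> 0" "q \<ge> 0" "z \<ge> 0" "x \<ge> 0" "y \<ge> 0"
    and tr: "x \<le> z + p" "p \<le> z + x" "y \<le> z + q" "q \<le> z + y"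
    and tau: "tau \<ge> 1" "tau \<le> 2 \<or> tau \<ge> 3"
  defines "w \<equiv> wmr1_weight tau True" and "L \<equiv> Lf tau x y"
  shows "p \<le> q \<Longrightarrow> q > tau * p \<Longrightarrow> p - q - 2 * z \<le> L * (- w)"
    and "p \<le> q \<Longrightarrow> \<not> q > tau * p \<Longrightarrow> p - q - 2 * z \<le> L * (- 1)"
    and "q \<le> p \<Longrightarrow> p > tau * q \<Longrightarrow> p - q - 2 * z \<le> L * w"
    and "q \<le> p \<Longrightarrow> \<not> p > tau * q \<Longrightarrow> p - q - 2 * z \<le> L * 1"
proof -
  have L0: "L \<ge> 0" unfolding L_def Lf_def by auto
  have w1: "w \<ge> 1" unfolding w_def using w_ge1[OF tau(1)] .
  have LD: "L \<le> max 0 (x - y)"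
  proof (cases "tau \<ge> 3")
    case True then show ?thesis unfolding L_def Lf_def by simp
  next
    case False
    have "(x - y) / tau \<le> max 0 (x - y)"
    proof (cases "x - y \<ge> 0")
      case True
      then have "(x - y) / tau \<le> (x - y)" using tau by (simp add: divide_le_eq mult_le_cancel_left1)
      then show ?thesis by simp
    next
      case False
      then have "(x - y) / tau \<le> 0" using tau by (simp add: divide_nonpos_pos)
      then show ?thesis by simp
    qed
    then show ?thesis using False unfolding L_def Lf_def by auto
  qed
  have gT: "p - q - 2 * z \<le> x - y" using two_T[OF tr(2) tr(3)] .
  show "p \<le> q \<Longrightarrow> \<not> q > tau * p \<Longrightarrow> p - q - 2 * z \<le> L * (- 1)"
  proof -
    assume "p \<le> q"
    then have "p - q - 2 * z \<le> - (x - y)" "p - q - 2 * z \<le> 0" using two_S[OF tr(1) tr(4) _ nn(3)] by auto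
    then show ?thesis using LD by simp
  qed
  show "q \<le> p \<Longrightarrow> p > tau * q \<Longrightarrow> p - q - 2 * z \<le> L * w"
  proof -
    have "x - y \<le> L * w"
    proof (cases "tau \<ge> 3")
      case True
      then have "x - y \<le> L" unfolding L_def Lf_def by simp
      also have "L \<le> L * w" using L0 w1 by (simp add: mult_le_cancel_left1)
      finally show ?thesis .
    next
      case False
      have t2: "tau \<le> 2" using False tau(2) by auto
      then have "tau < sqrt 2 + 1" using sqrt2_facts(1) by linarith
      then have w: "w = tau" unfolding w_def by (rule w_small)
      have "(x - y) / tau \<le> L" using False unfolding L_def Lf_def by simp
      then show ?thesis using w tau by (simp add: divide_le_eq mult.commute)
    qed
    then show ?thesis using gT by linarith
  qed
  show "q \<le> p \<Longrightarrow> \<not> p > tau * q \<Longrightarrow> p - q - 2 * z \<le> L * 1"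
  proof -
    assume "\<not> p > tau * q"
    then have ptq: "p \<le> tau * q" by simp
    show ?thesis
    proof (cases "tau \<ge> 3")
      case True
      then have "x - y \<le> L" unfolding L_def Lf_def by simp
      then show ?thesis using gT by simp
    next
      case False
      have "p - q - 2 * z \<le> (tau - 1) * y" using two_Tw[OF tr(4) ptq tau(1) _ nn(3)] False by simp
      then have "p - q - 2 * z \<le> min (x - y) ((tau - 1) * y)" using gT by simp
      also have "\<dots> \<le> L" using False unfolding L_def Lf_def by simp
      finally show ?thesis by simp
    qed
  qed
  show "p \<le> q \<Longrightarrow> q > tau * p \<Longrightarrow> p - q - 2 * z \<le> L * (- w)"
  proof -
    assume pq: "p \<le> q" and st: "q > tau * p"
    have g1: "p - q - 2 * z \<le> - (x - y)" "p - q - 2 * z \<le> 0" using two_S[OF tr(1) tr(4) pq nn(3)] by auto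
    show ?thesis
    proof (cases "tau \<ge> 3")
      case True
      have tb: "tau \<ge> sqrt 2 + 1" using True sqrt2_le2 by linarith
      have t1: "tau - 1 > 0" using True by simp
      have "w = (tau + 1) / (tau - 1)" unfolding w_def using w_big[OF tb] .
      then have w2: "w \<le> 2" using True t1 by (simp add: divide_le_eq)
      have "L \<le> x" using True nn unfolding L_def Lf_def by simp
      then have "L * w \<le> x * 2" using w2 L0 nn w1 by (intro mult_mono) auto
      moreover have "p - q - 2 * z \<le> - 2 * x" using two_Ss_big[OF tr(1) st True nn(1)] .
      ultimately show ?thesis by simp
    next
      case False
      have t2: "tau \<le> 2" using False tau(2) by auto
      then have "tau < sqrt 2 + 1" using sqrt2_facts(1) by linarith
      then have w: "w = tau" unfolding w_def by (rule w_small)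
      have g2: "p - q - 2 * z \<le> - (tau * min (x - y) ((tau - 1) * y))"
        using two_Ss_small[OF tr(1) tr(4) st tau(1) _ nn(1) nn(5) nn(4)] False by simp
      have Lc: "L = 0 \<or> L = (x - y) / tau \<or> L = min (x - y) ((tau - 1) * y)"
        using False unfolding L_def Lf_def max_def by presburger
      then show ?thesis
      proof (elim disjE)
        assume "L = 0" then show ?thesis using g1 by simp
      next
        assume "L = (x - y) / tau"
        then have "L * (- w) = - (x - y)" using w tau by simp
        then show ?thesis using g1 by simp
      next
        assume "L = min (x - y) ((tau - 1) * y)"
        then show ?thesis using g2 w by (simp add: mult.commute)
      qed
    qed
  qed
qed


lemma plus_two:
  assumes ms: "Metric_space M d" and fin: "finite N" and vN: "vloc ` N \<subseteq> M" and cC: "cloc ` C \<subseteq> M"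
    and tau: "tau \<ge> 1" "tau \<le> 2 \<or> tau \<ge> 3" and cons: "consistent_prefs d N vloc C cloc pref"
    and tour: "wmr1_tournament d N vloc C cloc pref tau beats"
    and PQ: "P \<in> C" "Q \<in> C" "P \<noteq> Q" "beats P Q" and Z: "Z \<in> C"
  shows "social_cost d N vloc (cloc P) - social_cost d N vloc (cloc Q) \<le> 2 * social_cost d N vloc (cloc Z)"
proof -
  define w where "w = wmr1_weight tau True"
  define x where "x = d (cloc Z) (cloc P)"
  define y where "y = d (cloc Z) (cloc Q)"
  define L where "L = Lf tau x y"
  have x0: "x \<ge> 0" and y0: "y \<ge> 0" unfolding x_def y_def using Metric_space.nonneg[OF ms] by auto
  have L0: "L \<ge> 0" unfolding L_def Lf_def by auto
  have "(\<Sum>i\<in>N. d (vloc i) (cloc P) - d (vloc i) (cloc Q) - 2 * d (vloc i) (cloc Z)) \<le> 0"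
  proof (rule sum_sig_le[OF fin cons PQ(1,2,3) tour PQ(4) L0])
    fix i assume i: "i \<in> N"
    define p where "p = d (vloc i) (cloc P)"
    define q where "q = d (vloc i) (cloc Q)"
    define z where "z = d (vloc i) (cloc Z)"
    have vi: "vloc i \<in> M" and cp: "cloc P \<in> M" and cq: "cloc Q \<in> M" and cz: "cloc Z \<in> M"
      using i PQ Z vN cC by auto
    have p0: "p \<ge> 0" and q0: "q \<ge> 0" and z0: "z \<ge> 0"
      unfolding p_def q_def z_def using Metric_space.nonneg[OF ms] by auto
    have cm: "\<And>a b. d a b = d b a" using Metric_space.commute[OF ms] by blast
    have t1: "x \<le> z + p" unfolding x_def z_def p_def
      using Metric_space.triangle[OF ms cz vi cp] cm[of "cloc Z" "vloc i"] by simp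
    have t2: "p \<le> z + x" unfolding x_def z_def p_def
      using Metric_space.triangle[OF ms vi cz cp] by simp
    have t3: "y \<le> z + q" unfolding y_def z_def q_def
      using Metric_space.triangle[OF ms cz vi cq] cm[of "cloc Z" "vloc i"] by simp
    have t4: "q \<le> z + y" unfolding y_def z_def q_def
      using Metric_space.triangle[OF ms vi cz cq] by simp
    note TV = two_voter[OF p0 q0 z0 x0 y0 t1 t2 t3 t4 tau, folded w_def L_def]
    show "p - q - 2 * z \<le> L * sig d vloc cloc pref tau P Q i"
    proof (cases "pref i P Q")
      case True
      then have pq: "p \<le> q" using conjunct2[OF cons[unfolded consistent_prefs_def, rule_format, OF i PQ(1) PQ(2) PQ(3)]]
        unfolding p_def q_def by blast
      show ?thesis
      proof (cases "q > tau * p")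
        case True
        then have "sig d vloc cloc pref tau P Q i = - w"
          using \<open>pref i P Q\<close> unfolding sig_def w_def strong_pref_def p_def q_def by simp
        then show ?thesis using TV(1)[OF pq True] by simp
      next
        case False
        then have "sig d vloc cloc pref tau P Q i = - 1"
          using \<open>pref i P Q\<close> unfolding sig_def strong_pref_def p_def q_def by (simp add: w_false)
        then show ?thesis using TV(2)[OF pq False] by simp
      qed
    next
      case False
      then have pr: "pref i Q P" using conjunct1[OF cons[unfolded consistent_prefs_def, rule_format, OF i PQ(1) PQ(2) PQ(3)]]
        by blast
      then have qp: "q \<le> p" using conjunct2[OF cons[unfolded consistent_prefs_def, rule_format, OF i PQ(2) PQ(1) PQ(3)[symmetric]]]
        unfolding p_def q_def by blast
      show ?thesis
      proof (cases "p > tau * q")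
        case True
        then have "sig d vloc cloc pref tau P Q i = w"
          using False unfolding sig_def w_def strong_pref_def p_def q_def by simp
        then show ?thesis using TV(3)[OF qp True] by simp
      next
        case F2: False
        then have "sig d vloc cloc pref tau P Q i = 1"
          using False unfolding sig_def strong_pref_def p_def q_def by (simp add: w_false)
        then show ?thesis using TV(4)[OF qp F2] by simp
      qed
    qed
  qed
  then have "(\<Sum>i\<in>N. d (vloc i) (cloc P)) - (\<Sum>i\<in>N. d (vloc i) (cloc Q)) - 2 * (\<Sum>i\<in>N. d (vloc i) (cloc Z)) \<le> 0"
    by (simp add: sum_subtractf sum_distrib_left)
  then show ?thesis unfolding social_cost_def by simp
qed




lemma max_sq: fixes A B :: real assumes "A \<ge> 0" "B \<ge> 0"
  shows "max (A\<^sup>2) (B\<^sup>2) = (max A B)\<^sup>2"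
proof (cases "A \<le> B")
  case True
  then have "A\<^sup>2 \<le> B\<^sup>2" using assms by (intro power_mono) auto
  then show ?thesis using True by (simp add: max_def)
next
  case False
  then have "B\<^sup>2 \<le> A\<^sup>2" using assms by (intro power_mono) auto
  then show ?thesis using False by (simp add: max_def)
qed

theorem mainTheorem6:
  fixes M :: "'a set" and d :: "'a \<Rightarrow> 'a \<Rightarrow> real"
    and N :: "'v set" and vloc :: "'v \<Rightarrow> 'a"
    and C :: "'c set" and cloc :: "'c \<Rightarrow> 'a"
    and pref :: "'v \<Rightarrow> 'c \<Rightarrow> 'c \<Rightarrow> bool" and beats :: "'c \<Rightarrow> 'c \<Rightarrow> bool"
    and tau :: real and P :: 'c
  assumes "Metric_space M d"
    and "finite N" and "N \<noteq> {}" and "vloc ` N \<subseteq> M"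
    and "finite C" and "cloc ` C \<subseteq> M"
    and "tau \<ge> 1"
    and "consistent_prefs d N vloc C cloc pref"
    and "wmr1_tournament d N vloc C cloc pref tau beats"
    and "uncovered C beats P"
  shows "\<forall>Z\<in>C. social_cost d N vloc (cloc P) \<le>
           min (max ((3 * tau - 1) / (tau + 1)) ((tau + 2) / tau) + 2)
               (max (((3 * tau - 1) / (tau + 1))\<^sup>2) (((tau + 2) / tau)\<^sup>2))
           * social_cost d N vloc (cloc Z)"
proof
  fix Z assume Z: "Z \<in> C"
  define f where "f = fb tau"
  define S where "S = (\<lambda>X. social_cost d N vloc (cloc X))"
  have A0: "(3 * tau - 1) / (tau + 1) \<ge> 0" using assms(7) by simp
  have B0: "(tau + 2) / tau \<ge> 0" using assms(7) by simp
  have c_eq: "min (max ((3 * tau - 1) / (tau + 1)) ((tau + 2) / tau) + 2)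
               (max (((3 * tau - 1) / (tau + 1))\<^sup>2) (((tau + 2) / tau)\<^sup>2)) = min (f + 2) (f\<^sup>2)"
    unfolding f_def fb_def using max_sq[OF A0 B0] by simp
  have f1: "f \<ge> 1" unfolding f_def using f_ge1[OF assms(7)] .
  have S0: "\<And>X. S X \<ge> 0" unfolding S_def social_cost_def
    using Metric_space.nonneg[OF assms(1)] by (simp add: sum_nonneg)
  have ff: "f \<le> f\<^sup>2" using f1 by (simp add: power2_eq_square)
  have fc: "f \<le> min (f + 2) (f\<^sup>2)" using ff by simp
  have P: "P \<in> C" using assms(10) unfolding uncovered_def by blast
  have direct: "S P \<le> min (f + 2) (f\<^sup>2) * S Z" if bz: "beats P Z" "Z \<noteq> P"
  proof -
    have "S P \<le> f * S Z" unfolding S_def f_def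
      using one_step[OF assms(1,2,4,6,7,8,9) P Z bz(2)[symmetric] bz(1)] .
    also have "\<dots> \<le> min (f + 2) (f\<^sup>2) * S Z" using fc S0 by (intro mult_right_mono) auto
    finally show ?thesis .
  qed
  have "S P \<le> min (f + 2) (f\<^sup>2) * S Z"
  proof (cases "Z = P")
    case True
    have "1 \<le> min (f + 2) (f\<^sup>2)" using fc f1 by linarith
    then have "1 * S P \<le> min (f + 2) (f\<^sup>2) * S P" using S0 by (intro mult_right_mono) auto
    then show ?thesis using True by simp
  next
    case ZP: False
    then have "beats P Z \<or> (\<exists>Q\<in>C. beats P Q \<and> beats Q Z)"
      using assms(10) Z unfolding uncovered_def by blast
    then show ?thesis
    proof
      assume "beats P Z" then show ?thesis using direct ZP by blast
    next
      assume "\<exists>Q\<in>C. beats P Q \<and> beats Q Z"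
      then obtain Q where Q: "Q \<in> C" "beats P Q" "beats Q Z" by blast
      show ?thesis
      proof (cases "Q = P \<or> Q = Z")
        case True
        then have "beats P Z" using Q by blast
        then show ?thesis using direct ZP by blast
      next
        case False
        then have QP: "Q \<noteq> P" and QZ: "Q \<noteq> Z" by auto
        have s1: "S P \<le> f * S Q" unfolding S_def f_def
          using one_step[OF assms(1,2,4,6,7,8,9) P Q(1) QP[symmetric] Q(2)] .
        have s2: "S Q \<le> f * S Z" unfolding S_def f_def
          using one_step[OF assms(1,2,4,6,7,8,9) Q(1) Z QZ Q(3)] .
        have sq: "S P \<le> f\<^sup>2 * S Z"
        proof -
          have "f * S Q \<le> f * (f * S Z)" using s2 f1 by (intro mult_left_mono) auto
          then show ?thesis using s1 by (simp add: power2_eq_square mult.assoc)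
        qed
        show ?thesis
        proof (cases "tau \<le> 2 \<or> tau \<ge> 3")
          case True
          have "S P - S Q \<le> 2 * S Z" unfolding S_def
            using plus_two[OF assms(1,2,4,6,7) True assms(8,9) P Q(1) QP[symmetric] Q(2) Z] .
          then have "S P \<le> (f + 2) * S Z" using s2 by (simp add: algebra_simps)
          then show ?thesis using sq by (simp add: min_def)
        next
          case False
          then have t: "2 < tau" "tau < 3" by auto
          have "(3 * tau - 1) / (tau + 1) < 2" using t by (simp add: divide_less_eq)
          moreover have "(tau + 2) / tau < 2" using t by (simp add: divide_less_eq)
          ultimately have f2: "f < 2" unfolding f_def fb_def by simp
          have "f\<^sup>2 \<le> f + 2"
          proof -
            have "(f - 2) * (f + 1) \<le> 0" using f2 f1 by (intro mult_nonpos_nonneg) auto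
            then show ?thesis by (simp add: power2_eq_square algebra_simps)
          qed
          then show ?thesis using sq by (simp add: min_def)
        qed
      qed
    qed
  qed
  then show "social_cost d N vloc (cloc P) \<le>
           min (max ((3 * tau - 1) / (tau + 1)) ((tau + 2) / tau) + 2)
               (max (((3 * tau - 1) / (tau + 1))\<^sup>2) (((tau + 2) / tau)\<^sup>2))
           * social_cost d N vloc (cloc Z)" unfolding c_eq S_def .
qed


end
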